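(* Let $\Omega\subset\mathbb{R}^n$ ($n\ge2$) be open, $\alpha\in[0,n]$ and $\mathcal{G}\in L^1(\Omega;\mathbb{R}^+)$. Suppose that for some $\lambda,\varrho>0$ and $\xi\in\Omega$ there is a point $z\in\Omega_\varrho(\xi)$ with $\mathbf{M}_\alpha\mathcal{G}(z)\le\lambda$. Then for all $\sigma>3^n$, $$d^\alpha_{\mathcal{G}}(\Omega_\varrho(\xi);\sigma\lambda)\le d^\alpha_{\chi_{B_{2\varrho}(\xi)}\mathcal{G}}(\Omega_\varrho(\xi);\sigma\lambda).$$
   Context: Functions on $\Omega$ are extended by zero outside $\Omega$. $B_\rho(x)$ is the open ball, $\Omega_\rho(x)=B_\rho(x)\cap\Omega$, $\chi_E$ the indicator of $E$. $\mathbf{M}_\alpha f(x)=\sup_{\rho>0}\rho^\alpha\fint_{B_\rho(x)}|f|$ and $d^\alpha_{h}(E;\lambda)=\mathcal{L}^n(\{x\in E:\mathbf{M}_\alpha h(x)>\lambda\})$. *)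

theory Defs
  imports "HOL-Analysis.Analysis"
begin

definition zero_ext :: "'a set \<Rightarrow> ('a \<Rightarrow> real) \<Rightarrow> 'a \<Rightarrow> real" where
  "zero_ext \<Omega> f = (\<lambda>x. if x \<in> \<Omega> then f x else 0)"

definition frac_max :: "real \<Rightarrow> ('a::euclidean_space \<Rightarrow> real) \<Rightarrow> 'a \<Rightarrow> ennreal" where
  "frac_max \<alpha> f x = (SUP \<rho>\<in>{0<..}. ennreal (\<rho> powr \<alpha>) *
      ((\<integral>\<^sup>+ y \<in> ball x \<rho>. ennreal \<bar>f y\<bar> \<partial>lebesgue) / emeasure lebesgue (ball x \<rho>)))"

definition dist_fun :: "real \<Rightarrow> ('a::euclidean_space \<Rightarrow> real) \<Rightarrow> 'a set \<Rightarrow> real \<Rightarrow> ennreal" where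
  "dist_fun \<alpha> h E t = emeasure lebesgue {x \<in> E. frac_max \<alpha> h x > ennreal t}"

end

theory Submission
  imports Defs
begin

lemma emeas_ball: "r \<ge> 0 \<Longrightarrow> emeasure lebesgue (ball (c::'a::euclidean_space) r) = ennreal (unit_ball_vol (DIM('a)) * r ^ DIM('a))"
  using emeasure_ball[of r c] by simp

lemma key:
  fixes G :: "'a::euclidean_space \<Rightarrow> real"
  assumes x: "x \<in> ball \<xi> \<rho>" and z: "z \<in> ball \<xi> \<rho>"
    and fz: "frac_max \<alpha> G z \<le> ennreal lam"
    and sig: "\<sigma> > 3 ^ DIM('a)" and al: "\<alpha> \<ge> 0" and lam: "lam > 0" and r: "r > 0"
    and T: "ennreal (r powr \<alpha>) *
      ((\<integral>\<^sup>+ y \<in> ball x r. ennreal \<bar>G y\<bar> \<partial>lebesgue) / emeasure lebesgue (ball x r)) > ennreal (\<sigma> * lam)"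
  shows "r < \<rho>"
proof (rule ccontr)
  assume "\<not> r < \<rho>"
  hence rr: "\<rho> \<le> r" by simp
  define c where "c = unit_ball_vol (real DIM('a))"
  have c: "c > 0" unfolding c_def by simp
  define n where "n = DIM('a)"
  have sub: "ball x r \<subseteq> ball z (3*r)"
  proof
    fix y assume "y \<in> ball x r"
    hence "dist x y < r" by simp
    moreover have "dist z x < 2 * \<rho>" using x z dist_triangle[of z x \<xi>] by (simp add: dist_commute)
    ultimately have "dist z y < 3 * r" using dist_triangle[of z y x] rr by linarith
    thus "y \<in> ball z (3*r)" by simp
  qed
  define A where "A = (\<integral>\<^sup>+ y \<in> ball x r. ennreal \<bar>G y\<bar> \<partial>lebesgue)"
  define A' where "A' = (\<integral>\<^sup>+ y \<in> ball z (3*r). ennreal \<bar>G y\<bar> \<partial>lebesgue)"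
  have AA: "A \<le> A'" unfolding A_def A'_def
    by (intro nn_integral_mono) (use sub in \<open>auto split: split_indicator\<close>)
  have m: "emeasure lebesgue (ball x r) = ennreal (c * r ^ n)"
    using emeas_ball[of r x] r by (simp add: c_def n_def)
  have m': "emeasure lebesgue (ball z (3*r)) = ennreal (c * (3*r) ^ n)"
    using emeas_ball[of "3*r" z] r by (simp add: c_def n_def)
  have pos: "c * r ^ n > 0" "c * (3*r)^n > 0" using c r by auto
  define T' where "T' = ennreal ((3*r) powr \<alpha>) * (A' / emeasure lebesgue (ball z (3*r)))"
  have "T' \<le> frac_max \<alpha> G z" unfolding frac_max_def T'_def A'_def
    by (rule SUP_upper2[of "3*r"]) (use r in auto)
  hence Tl: "T' \<le> ennreal lam" using fz by simp
  show False
  proof (cases A rule: ennreal_cases)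
    case top
    hence "A' = top" using AA by (simp add: top_unique)
    hence "T' = top" unfolding T'_def m' using pos r
      by (simp add: ennreal_top_divide ennreal_mult_top)
    thus False using Tl by (metis ennreal_neq_top top_unique)
  next
    case (real a)
    have t0: "ennreal ((3*r) powr \<alpha>) * (A / ennreal (c * (3*r) ^ n)) \<le> T'"
      unfolding T'_def m' by (intro mult_left_mono divide_right_mono_ennreal AA) auto
    have eq: "ennreal ((3*r) powr \<alpha>) * (A / ennreal (c * (3*r) ^ n)) = ennreal ((3*r) powr \<alpha> * (a / (c * (3*r) ^ n)))"
      using real pos by (simp add: divide_ennreal flip: ennreal_mult)
    have t1: "ennreal ((3*r) powr \<alpha> * (a / (c * (3*r) ^ n))) \<le> ennreal lam" using Tl t0 eq by simp
    have "ennreal (r powr \<alpha>) * (A / emeasure lebesgue (ball x r)) = ennreal (r powr \<alpha> * (a / (c * r ^ n)))"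
      using real pos m by (simp add: divide_ennreal flip: ennreal_mult)
    moreover have "0 \<le> \<sigma> * lam" using sig lam
    proof -
      have "(0::real) < 3 ^ DIM('a)" by simp
      thus ?thesis using sig lam by (intro mult_nonneg_nonneg) linarith+
    qed
    ultimately have t2: "r powr \<alpha> * (a / (c * r ^ n)) > \<sigma> * lam" using T unfolding A_def
      by (simp add: ennreal_less_iff)
    have "(3*r) powr \<alpha> * (a / (c * (3*r) ^ n)) = (3 powr \<alpha>) * (r powr \<alpha> * (a / (c * r ^ n))) / 3^n"
      using r by (simp add: powr_mult power_mult_distrib field_simps)
    also have "\<dots> \<ge> (r powr \<alpha> * (a / (c * r ^ n))) / 3^n"
    proof -
      define q where "q = r powr \<alpha> * (a / (c * r ^ n))"
      have q0: "q \<ge> 0" unfolding q_def using real pos r by simp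
      have "(1::real) \<le> 3 powr \<alpha>" using al by (simp add: ge_one_powr_ge_zero)
      hence "1 * q \<le> 3 powr \<alpha> * q" using q0 by (intro mult_right_mono) auto
      thus ?thesis unfolding q_def by (intro divide_right_mono) auto
    qed
    finally have t3: "(3*r) powr \<alpha> * (a / (c * (3*r) ^ n)) \<ge> (r powr \<alpha> * (a / (c * r ^ n))) / 3^n" .
    have "(r powr \<alpha> * (a / (c * r ^ n))) / 3^n > (\<sigma> * lam) / 3^n"
      using t2 by (intro divide_strict_right_mono) auto
    moreover have "(\<sigma> * lam) / 3^n > lam" using sig lam unfolding n_def by (simp add: field_simps)
    ultimately have "(3*r) powr \<alpha> * (a / (c * (3*r) ^ n)) > lam" using t3 by linarith
    thus False using t1 lam by (simp add: ennreal_le_iff)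
  qed
qed

theorem mainTheorem6:
  fixes \<Omega> :: "'a::euclidean_space set" and G :: "'a \<Rightarrow> real"
    and \<alpha> lam \<rho> \<sigma> :: real and \<xi> z :: 'a
  assumes "DIM('a) \<ge> 2"
    and "open \<Omega>"
    and "0 \<le> \<alpha>" "\<alpha> \<le> real DIM('a)"
    and "set_integrable lebesgue \<Omega> G"
    and "\<And>x. x \<in> \<Omega> \<Longrightarrow> G x \<ge> 0"
    and "lam > 0" "\<rho> > 0" "\<xi> \<in> \<Omega>"
    and "z \<in> ball \<xi> \<rho> \<inter> \<Omega>"
    and "frac_max \<alpha> (zero_ext \<Omega> G) z \<le> ennreal lam"
    and "\<sigma> > 3 ^ DIM('a)"
  shows "dist_fun \<alpha> (zero_ext \<Omega> G) (ball \<xi> \<rho> \<inter> \<Omega>) (\<sigma> * lam)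
         \<le> dist_fun \<alpha> (\<lambda>x. indicator (ball \<xi> (2 * \<rho>)) x * zero_ext \<Omega> G x) (ball \<xi> \<rho> \<inter> \<Omega>) (\<sigma> * lam)"
proof -
  define G0 where "G0 = zero_ext \<Omega> G"
  define G1 where "G1 = (\<lambda>x. indicator (ball \<xi> (2 * \<rho>)) x * zero_ext \<Omega> G x)"
  define E where "E = ball \<xi> \<rho> \<inter> \<Omega>"
  have "{x \<in> E. frac_max \<alpha> G0 x > ennreal (\<sigma> * lam)} = {x \<in> E. frac_max \<alpha> G1 x > ennreal (\<sigma> * lam)}"
  proof (intro Collect_cong conj_cong refl iffI)
    fix x assume xE: "x \<in> E" and h: "frac_max \<alpha> G0 x > ennreal (\<sigma> * lam)"
    from h obtain r where r: "r > 0" and T: "ennreal (r powr \<alpha>) *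
      ((\<integral>\<^sup>+ y \<in> ball x r. ennreal \<bar>G0 y\<bar> \<partial>lebesgue) / emeasure lebesgue (ball x r)) > ennreal (\<sigma> * lam)"
      unfolding frac_max_def by (auto simp: less_SUP_iff)
    have "r < \<rho>"
      by (rule key[of x \<xi> \<rho> z \<alpha> G0 lam \<sigma> r]) (use assms xE r T in \<open>auto simp: E_def G0_def\<close>)
    have sub: "ball x r \<subseteq> ball \<xi> (2*\<rho>)"
    proof
      fix y assume "y \<in> ball x r"
      thus "y \<in> ball \<xi> (2*\<rho>)" using xE \<open>r < \<rho>\<close> dist_triangle[of \<xi> y x] by (auto simp: E_def)
    qed
    have "(\<integral>\<^sup>+ y \<in> ball x r. ennreal \<bar>G1 y\<bar> \<partial>lebesgue) = (\<integral>\<^sup>+ y \<in> ball x r. ennreal \<bar>G0 y\<bar> \<partial>lebesgue)"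
      by (intro nn_integral_cong) (use sub in \<open>auto simp: G0_def G1_def split: split_indicator\<close>)
    with T have T1: "ennreal (r powr \<alpha>) *
      ((\<integral>\<^sup>+ y \<in> ball x r. ennreal \<bar>G1 y\<bar> \<partial>lebesgue) / emeasure lebesgue (ball x r)) > ennreal (\<sigma> * lam)" by simp
    have "ennreal (r powr \<alpha>) *
      ((\<integral>\<^sup>+ y \<in> ball x r. ennreal \<bar>G1 y\<bar> \<partial>lebesgue) / emeasure lebesgue (ball x r)) \<le> frac_max \<alpha> G1 x"
      unfolding frac_max_def by (rule SUP_upper2[of r]) (use r in auto)
    with T1 show "frac_max \<alpha> G1 x > ennreal (\<sigma> * lam)" by simp
  next
    fix x assume h: "frac_max \<alpha> G1 x > ennreal (\<sigma> * lam)"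
    have "frac_max \<alpha> G1 x \<le> frac_max \<alpha> G0 x"
      unfolding frac_max_def
      by (intro SUP_mono' mult_left_mono divide_right_mono_ennreal nn_integral_mono)
         (auto simp: G0_def G1_def abs_mult split: split_indicator)
    with h show "frac_max \<alpha> G0 x > ennreal (\<sigma> * lam)" by simp
  qed
  thus ?thesis unfolding dist_fun_def G0_def G1_def E_def by simp
qed

end
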